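(* For every integer $n\ge 53$, $5^n$ is selfcondensable.
   Context: For a finite nonempty multiset $S$ of real numbers, $V(S)$ is the smallest set of real numbers such that: (1) if $|S|=1$ then $S\subseteq V(S)$; (2) if $|S|\ge 2$, then for all nonempty multisets $A,B$ with $A+B=S$ (multiplicities add) and all $a\in V(A)$, $b\in V(B)$, each of $a+b,\ a-b,\ b-a,\ ab,\ a/b,\ b/a,\ a^b,\ b^a$ lies in $V(S)$ whenever it is a well-defined real number; (3) if $a\in V(S)$ is a nonnegative integer then $a!\in V(S)$ (with $0!=1$). A positive integer $N$ is selfcondensable if $N\in V(S_N)$, where $S_N$ is the multiset of the digits of the decimal representation of $N$ (each digit counted with its multiplicity). *)

theory Defs
  imports Complex_Main "HOL-Library.Multiset"
begin

text \<open>Real exponentiation a^b, defined exactly when it is a well-defined real number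
  (conservative reading): positive base with arbitrary real exponent; zero base with
  positive exponent; negative base with integer exponent.\<close>
definition pow_result :: "real \<Rightarrow> real \<Rightarrow> real \<Rightarrow> bool" where
  "pow_result a b c \<longleftrightarrow>
     (a > 0 \<and> c = a powr b) \<or>
     (a = 0 \<and> b > 0 \<and> c = 0) \<or>
     (a < 0 \<and> b \<in> \<int> \<and> c = a powi \<lfloor>b\<rfloor>)"

definition combine :: "real \<Rightarrow> real \<Rightarrow> real set" where
  "combine a b = {a + b, a - b, b - a, a * b}
      \<union> (if b \<noteq> 0 then {a / b} else {}) \<union> (if a \<noteq> 0 then {b / a} else {})
      \<union> {c. pow_result a b c} \<union> {c. pow_result b a c}"

inductive inV :: "real multiset \<Rightarrow> real \<Rightarrow> bool" where
  single: "inV {#x#} x"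
| comb: "A \<noteq> {#} \<Longrightarrow> B \<noteq> {#} \<Longrightarrow> inV A a \<Longrightarrow> inV B b \<Longrightarrow> c \<in> combine a b
           \<Longrightarrow> inV (A + B) c"
| factorial: "inV S a \<Longrightarrow> a = real k \<Longrightarrow> inV S (fact k)"

fun digits10 :: "nat \<Rightarrow> nat list" where
  "digits10 n = (if n < 10 then [n] else n mod 10 # digits10 (n div 10))"

definition digit_mset :: "nat \<Rightarrow> real multiset" where
  "digit_mset N = image_mset real (mset (digits10 N))"

definition selfcondensable :: "nat \<Rightarrow> bool" where
  "selfcondensable N \<longleftrightarrow> N > 0 \<and> inV (digit_mset N) (real N)"

end

theory Submission
  imports Defs
begin

lemma one_combine: "(1::real) \<in> combine 1 v"
  unfolding combine_def pow_result_def by simp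

lemma val_exists: "M \<noteq> {#} \<Longrightarrow> \<exists>v. inV M v"
proof (induction M)
  case empty then show ?case by simp
next
  case (add x M)
  show ?case
  proof (cases "M = {#}")
    case True then show ?thesis using inV.single by auto
  next
    case False
    then obtain v where v: "inV M v" using add by auto
    have "inV ({#x#} + M) (x + v)"
      by (rule inV.comb[OF _ False inV.single v]) (auto simp: combine_def)
    then show ?thesis by auto
  qed
qed

lemma absorb1: "inV A 1 \<Longrightarrow> A \<noteq> {#} \<Longrightarrow> B \<noteq> {#} \<Longrightarrow> inV (A + B) 1"
  using val_exists[of B] inV.comb one_combine by blast

lemma add_val: "inV A a \<Longrightarrow> inV B b \<Longrightarrow> A \<noteq> {#} \<Longrightarrow> B \<noteq> {#} \<Longrightarrow> inV (A + B) (a + b)"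
  by (rule inV.comb) (auto simp: combine_def)

lemma mult_val: "inV A a \<Longrightarrow> inV B b \<Longrightarrow> A \<noteq> {#} \<Longrightarrow> B \<noteq> {#} \<Longrightarrow> inV (A + B) (a * b)"
  by (rule inV.comb) (auto simp: combine_def)

lemma p5:
  fixes N :: "nat multiset"
  assumes dig: "\<forall>d\<in>#N. d < 10" and sz: "size N \<ge> 5"
  shows "\<exists>S T. N = S + T \<and> S \<noteq> {#} \<and> size S \<le> 2 \<and> inV (image_mset real S) 1"
proof -
  have one_pair: "\<exists>S T. N = S + T \<and> S \<noteq> {#} \<and> size S \<le> 2 \<and> inV (image_mset real S) 1"
    if "x \<in># N" "y \<in># N - {#x#}" "inV {#real x, real y#} 1" for x y
  proof -
    have e: "N = {#x, y#} + (N - {#x, y#})"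
      using that by (metis subset_mset.add_diff_inverse
          mset_subset_eq_single insert_subset_eq_iff)
    have "image_mset real {#x, y#} = {#real x, real y#}" by simp
    then have i: "inV (image_mset real {#x, y#}) 1" using that(3) by simp
    have "size {#x, y#} \<le> 2" by simp
    moreover have "{#x, y#} \<noteq> {#}" by simp
    ultimately show ?thesis using e i by (intro exI[of _ "{#x,y#}"] exI[of _ "N - {#x, y#}"]) blast
  qed
  show ?thesis
  proof (cases "0 \<in># N")
    case True
    have "inV {#real 0#} (fact 0)"
      by (rule inV.factorial[OF inV.single, of _ 0]) simp
    then have "inV (image_mset real {#0#}) 1" by simp
    moreover have "N = {#0#} + (N - {#0#})" using True by simp
    ultimately show ?thesis by (intro exI[of _ "{#0#}"] exI[of _ "N - {#0#}"]) auto
  next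
    case n0: False
    show ?thesis
    proof (cases "1 \<in># N")
      case True
      have "inV (image_mset real {#1#}) 1" using inV.single[of 1] by simp
      moreover have "N = {#1#} + (N - {#1#})" using True by simp
      ultimately show ?thesis by (intro exI[of _ "{#1#}"] exI[of _ "N - {#1#}"]) auto
    next
      case n1: False
      show ?thesis
      proof (cases "\<exists>d. count N d \<ge> 2")
        case True
        then obtain d where d: "count N d \<ge> 2" by auto
        then have "count N d > 0" by linarith
        then have dN: "d \<in># N" by simp
        then have dne: "d \<noteq> 0" using n0 by metis
        have "d \<in># N - {#d#}" using d by (simp add: in_diff_count)
        moreover have "inV {#real d, real d#} 1"
        proof -
          have "inV ({#real d#} + {#real d#}) (real d / real d)"
            by (rule inV.comb[OF _ _ inV.single inV.single]) (auto simp: combine_def dne)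
          then show ?thesis using dne by (simp add: add_mset_commute)
        qed
        ultimately show ?thesis using one_pair dN by blast
      next
        case nc: False
        show ?thesis
        proof (cases "\<exists>d. d \<in># N \<and> Suc d \<in># N")
          case True
          then obtain d where d: "d \<in># N" "Suc d \<in># N" by auto
          have "Suc d \<in># N - {#d#}" using d by (simp add: in_diff_count)
          moreover have "inV {#real d, real (Suc d)#} 1"
          proof -
            have "inV ({#real d#} + {#real (Suc d)#}) (real (Suc d) - real d)"
              by (rule inV.comb[OF _ _ inV.single inV.single]) (auto simp: combine_def)
            then show ?thesis by (simp add: add_mset_commute)
          qed
          ultimately show ?thesis using one_pair d by blast
        next
          case ns: False
          let ?A = "set_mset N"
          have eq: "N = mset_set ?A"
          proof (rule multiset_eqI)
            fix x show "count N x = count (mset_set ?A) x"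
            proof (cases "x \<in># N")
              case True
              then have "count N x > 0" by simp
              moreover have "\<not> count N x \<ge> 2" using nc by blast
              ultimately have "count N x = 1" by linarith
              then show ?thesis using True by (simp add: count_mset_set)
            next
              case False
              then show ?thesis by (simp add: count_mset_set not_in_iff)
            qed
          qed
          have inj: "inj_on (\<lambda>x. x div 2) ?A"
          proof (rule inj_onI)
            fix x y assume xy: "x \<in> ?A" "y \<in> ?A" "x div 2 = y div 2"
            show "x = y"
            proof (rule ccontr)
              assume "x \<noteq> y"
              then have "y = Suc x \<or> x = Suc y" using xy(3) by presburger
              then show False using ns xy by auto
            qed
          qed
          have "(\<lambda>x. x div 2) ` ?A \<subseteq> {1..4}"
          proof
            fix z assume "z \<in> (\<lambda>x. x div 2) ` ?A"
            then obtain x where x: "x \<in># N" "z = x div 2" by auto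
            have "x < 10" "x \<noteq> 0" "x \<noteq> 1" using dig x n0 n1 by metis+
            then show "z \<in> {1..4}" using x by auto
          qed
          have "card ((\<lambda>x. x div 2) ` ?A) \<le> 4"
          proof -
            have "card ((\<lambda>x. x div 2) ` ?A) \<le> card {1..4::nat}"
              by (rule card_mono[OF _ \<open>_ \<subseteq> {1..4}\<close>]) simp
            then show ?thesis by simp
          qed
          then have "card ?A \<le> 4" using card_image[OF inj] by simp
          then have "size N \<le> 4" using eq by (metis finite_set_mset size_mset_set)
          then show ?thesis using sz by simp
        qed
      qed
    qed
  qed
qed


declare digits10.simps[simp del]

fun c2 :: "nat \<Rightarrow> nat" where
  "c2 n = (if n \<le> 1 then 1 else c2 (n div 2) + 2 + n mod 2)"

declare c2.simps[simp del]

lemma c2_pos: "c2 n \<ge> 1"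
  by (subst c2.simps) simp

lemma extract1:
  fixes N :: "nat multiset"
  assumes "\<forall>d\<in>#N. d < 10" "size N \<ge> 5"
  shows "\<exists>S T. N = S + T \<and> S \<noteq> {#} \<and> size T + 2 \<ge> size N \<and>
    inV (image_mset real S) 1 \<and> (\<forall>d\<in>#T. d < 10)"
proof -
  obtain S T where st: "N = S + T" "S \<noteq> {#}" "size S \<le> 2" "inV (image_mset real S) 1"
    using p5[OF assms] by blast
  have "size N = size S + size T" using st(1) by simp
  moreover have "\<forall>d\<in>#T. d < 10" using assms(1) st(1) by simp
  ultimately show ?thesis using st by (intro exI[of _ S] exI[of _ T]) auto
qed

lemma build:
  "\<forall>N::nat multiset. (\<forall>d\<in>#N. d < 10) \<longrightarrow> size N \<ge> 2 * c2 n + 3 \<longrightarrow> n \<ge> 1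
     \<longrightarrow> inV (image_mset real N) (real n)"
proof (induction n rule: less_induct)
  case (less n)
  show ?case
  proof (intro allI impI)
    fix N :: "nat multiset"
    assume dig: "\<forall>d\<in>#N. d < 10" and sz: "size N \<ge> 2 * c2 n + 3" and n1: "n \<ge> 1"
    show "inV (image_mset real N) (real n)"
    proof (cases "n = 1")
      case True
      then have "size N \<ge> 5" using sz by (simp add: c2.simps)
      then obtain S T where st: "N = S + T" "S \<noteq> {#}" "inV (image_mset real S) 1"
        using extract1 dig by blast
      show ?thesis
      proof (cases "T = {#}")
        case True then show ?thesis using st \<open>n = 1\<close> by simp
      next
        case False
        have "inV (image_mset real S + image_mset real T) 1"
          by (rule absorb1) (use st False in auto)
        then show ?thesis using st \<open>n = 1\<close> by simp
      qed
    next
      case False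
      define q where "q = n div 2"
      define r where "r = n mod 2"
      have q1: "q \<ge> 1" "q < n" using False n1 unfolding q_def by auto
      have nqr: "n = 2 * q + r" unfolding q_def r_def by simp
      have cn: "c2 n = c2 q + 2 + r" using False n1 unfolding q_def r_def
        by (subst c2.simps) auto
      have cq: "c2 q \<ge> 1" by (rule c2_pos)
      have r01: "r = 0 \<or> r = 1" unfolding r_def by auto
      have "size N \<ge> 5" using sz cn cq by linarith
      then obtain S1 T1 where s1: "N = S1 + T1" "S1 \<noteq> {#}" "size T1 + 2 \<ge> size N"
        "inV (image_mset real S1) 1" "\<forall>d\<in>#T1. d < 10"
        using extract1[OF dig] by blast
      have "size T1 \<ge> 5" using s1(3) sz cn cq by linarith
      then obtain S2 T2 where s2: "T1 = S2 + T2" "S2 \<noteq> {#}" "size T2 + 2 \<ge> size T1"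
        "inV (image_mset real S2) 1" "\<forall>d\<in>#T2. d < 10"
        using extract1[OF s1(5)] by blast
      have two: "inV (image_mset real (S1 + S2)) 2"
        using add_val[OF s1(4) s2(4)] s1(2) s2(2) by simp
      have ne12: "image_mset real (S1 + S2) \<noteq> {#}" using s1(2) by simp
      show ?thesis
      proof (cases "r = 0")
        case True
        have "size T2 \<ge> 2 * c2 q + 3" using s1(3) s2(3) sz cn True by linarith
        then have iq: "inV (image_mset real T2) (real q)" using less q1 s2(5) by blast
        have ne2: "image_mset real T2 \<noteq> {#}" using iq \<open>size T2 \<ge> _\<close> by auto
        have "inV (image_mset real T2 + image_mset real (S1 + S2)) (real q * 2)"
          by (rule mult_val[OF iq two ne2 ne12])
        moreover have "N = T2 + (S1 + S2)" using s1(1) s2(1) by (simp add: ac_simps)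
        ultimately show ?thesis using nqr True by (simp add: ac_simps)
      next
        case False
        then have r1: "r = 1" using r01 by simp
        have "size T2 \<ge> 5" using s1(3) s2(3) sz cn r1 cq by linarith
        then obtain S3 T3 where s3: "T2 = S3 + T3" "S3 \<noteq> {#}" "size T3 + 2 \<ge> size T2"
          "inV (image_mset real S3) 1" "\<forall>d\<in>#T3. d < 10"
          using extract1[OF s2(5)] by blast
        have "size T3 \<ge> 2 * c2 q + 3" using s1(3) s2(3) s3(3) sz cn r1 by linarith
        then have iq: "inV (image_mset real T3) (real q)" using less q1 s3(5) by blast
        have ne3: "image_mset real T3 \<noteq> {#}" using \<open>size T3 \<ge> _\<close> by auto
        have m: "inV (image_mset real T3 + image_mset real (S1 + S2)) (real q * 2)"
          by (rule mult_val[OF iq two ne3 ne12])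
        have "inV ((image_mset real T3 + image_mset real (S1 + S2)) + image_mset real S3) (real q * 2 + 1)"
          by (rule add_val[OF m s3(4)]) (use ne3 s3(2) in auto)
        moreover have "N = T3 + (S1 + S2) + S3" using s1(1) s2(1) s3(1) by (simp add: ac_simps)
        ultimately show ?thesis using nqr r1 by (simp add: ac_simps)
      qed
    qed
  qed
qed

lemma c2_bound: "n \<ge> 1 \<Longrightarrow> n < 2 ^ k \<Longrightarrow> c2 n \<le> 3 * k - 2"
proof (induction n arbitrary: k rule: less_induct)
  case (less n)
  show ?case
  proof (cases "n = 1")
    case True
    then have "k \<ge> 1" using less.prems by (cases k) auto
    then show ?thesis using True by (simp add: c2.simps)
  next
    case False
    then have n2: "n \<ge> 2" using less.prems by simp
    then obtain k' where k: "k = Suc k'" using less.prems by (cases k) auto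
    have "n div 2 < 2 ^ k'" using less.prems k by simp
    moreover have "n div 2 \<ge> 1" "n div 2 < n" using n2 by auto
    ultimately have "c2 (n div 2) \<le> 3 * k' - 2" using less.IH by blast
    moreover have "k' \<ge> 1" using \<open>n div 2 < 2 ^ k'\<close> \<open>n div 2 \<ge> 1\<close> by (cases k') auto
    moreover have "c2 n \<le> c2 (n div 2) + 3" using n2 by (subst c2.simps) auto
    ultimately show ?thesis using k by linarith
  qed
qed

lemma digits_lt: "\<forall>d\<in>set (digits10 N). d < 10"
  by (induction N rule: digits10.induct) (subst digits10.simps, auto)

lemma digits_len: "N \<ge> 10 ^ j \<Longrightarrow> length (digits10 N) \<ge> j + 1"
proof (induction j arbitrary: N)
  case 0 then show ?case by (subst digits10.simps) auto
next
  case (Suc j)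
  have a: "N \<ge> 10 * 10 ^ j" using Suc.prems by simp
  have "(1::nat) \<le> 10 ^ j" by simp
  then have "N \<ge> 10" using a by linarith
  moreover have "N div 10 \<ge> 10 ^ j" using div_le_mono[OF a, of 10] by simp
  ultimately show ?case using Suc.IH by (subst digits10.simps) auto
qed

lemma five_mod: "n \<ge> 1 \<Longrightarrow> (5::nat) ^ n mod 10 = 5"
proof (induction n rule: dec_induct)
  case base then show ?case by simp
next
  case (step m)
  have "(5::nat) ^ Suc m mod 10 = (5 * (5 ^ m mod 10)) mod 10" by (simp add: mod_mult_right_eq)
  then show ?case using step by simp
qed

lemma pow_big: "k \<ge> 6 \<Longrightarrow> (10::nat) ^ (6 * k + 5) \<le> 5 ^ (2 ^ k)"
proof (induction k rule: dec_induct)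
  case base then show ?case by simp
next
  case (step k)
  have "(64::nat) \<le> 2 ^ k" using step(1) power_increasing[of 6 k "2::nat"] by simp
  then have "(5::nat) ^ 64 \<le> 5 ^ (2 ^ k)" by (rule power_increasing) simp
  then have a: "(10::nat) ^ 6 \<le> 5 ^ (2 ^ k)" by (rule le_trans[rotated]) simp
  have e: "6 * Suc k + 5 = 6 + (6 * k + 5)" by simp
  have "(10::nat) ^ (6 * Suc k + 5) = 10 ^ 6 * 10 ^ (6 * k + 5)" by (simp only: e power_add)
  also have "\<dots> \<le> 5 ^ (2 ^ k) * 5 ^ (2 ^ k)" by (rule mult_le_mono[OF a step(3)])
  also have "\<dots> = 5 ^ (2 ^ Suc k)" by (simp add: power_add[symmetric] mult_2)
  finally show ?case .
qed

theorem lemma7p2: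
  fixes n :: nat
  assumes "n \<ge> 53"
  shows "selfcondensable (5 ^ n)"
proof -
  obtain k where k: "2 ^ k \<le> n" "n < 2 ^ (k + 1)"
    using ex_power_ivl1[of 2 n] assms by auto
  have k5: "k \<ge> 5"
  proof (rule ccontr)
    assume "\<not> k \<ge> 5"
    then have "2 ^ (k + 1) \<le> (2::nat) ^ 5" by (intro power_increasing) auto
    then show False using k assms by simp
  qed
  have big: "(10::nat) ^ (6 * k + 5) \<le> 5 ^ n"
  proof (cases "k = 5")
    case True
    have "(10::nat) ^ 35 \<le> 5 ^ 53" by simp
    also have "\<dots> \<le> 5 ^ n" using assms by (intro power_increasing) auto
    finally show ?thesis using True by simp
  next
    case False
    then have "(10::nat) ^ (6 * k + 5) \<le> 5 ^ (2 ^ k)" using k5 pow_big by simp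
    also have "\<dots> \<le> 5 ^ n" using k by (intro power_increasing) auto
    finally show ?thesis .
  qed
  define N where "N = (5::nat) ^ n"
  have "(10::nat) \<le> 10 ^ (6 * k + 5)" by (rule self_le_power) auto
  then have N10: "N \<ge> 10" using big unfolding N_def by linarith
  have dN: "digits10 N = 5 # digits10 (N div 10)"
    using N10 five_mod[of n] assms unfolding N_def by (subst digits10.simps) auto
  define R where "R = mset (digits10 (N div 10))"
  have len: "length (digits10 N) \<ge> 6 * k + 6" using digits_len[of "6 * k + 5" N] big N_def by simp
  have szR: "size R \<ge> 6 * k + 5" using len dN unfolding R_def by simp
  have "c2 n \<le> 3 * (k + 1) - 2" using c2_bound[of n "k+1"] k assms by simp
  moreover have "3 * (k + 1) - 2 = 3 * k + 1" by simp
  ultimately have "size R \<ge> 2 * c2 n + 3" using szR by linarith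
  moreover have "\<forall>d\<in>#R. d < 10" using digits_lt[of "N div 10"] unfolding R_def by simp
  ultimately have iR: "inV (image_mset real R) (real n)" using build assms by simp
  have ne: "image_mset real R \<noteq> {#}" using szR by auto
  have "inV ({#5#} + image_mset real R) (5 powr real n)"
    by (rule inV.comb[OF _ ne inV.single iR]) (auto simp: combine_def pow_result_def)
  moreover have "digit_mset N = {#5#} + image_mset real R"
    unfolding digit_mset_def dN R_def by simp
  moreover have "(5::real) powr real n = real N" unfolding N_def by (simp add: powr_realpow)
  moreover have "N > 0" unfolding N_def by simp
  ultimately show ?thesis unfolding selfcondensable_def N_def by simp
qed

end
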